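(* Let $1\le k\le d$ be integers. There exist $d+2$ mass assignments $\mu_0,\dots,\mu_{d+1}$ on the $k$-dimensional linear subspaces of $\mathbb{R}^d$ such that for no $k$-dimensional linear subspace $L$ of $\mathbb{R}^d$ is there a pair of parallel hyperplanes of $L$ whose closed region between them contains exactly half of each of $\mu_0^L,\dots,\mu_{d+1}^L$.
   Context: A mass distribution on a $k$-dimensional space $L$ is a probability measure on $L$ absolutely continuous with respect to Lebesgue measure on $L$. A mass assignment on the $k$-dimensional linear subspaces of $\mathbb{R}^d$ is an assignment $L\mapsto \mu^L$ of a mass distribution $\mu^L$ on $L$ to every $k$-dimensional linear subspace $L$, depending continuously on $L$. *)

theory Defs
  imports "HOL-Analysis.Analysis" "HOL-Probability.Probability"
begin

definition k_subspace :: "'k::finite itself \<Rightarrow> (real^'n::finite) set \<Rightarrow> bool" where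
  "k_subspace _ L \<longleftrightarrow> subspace L \<and> dim L = CARD('k)"

text \<open>Mass distribution on L: a Borel probability measure on R^d concentrated on L and
  absolutely continuous w.r.t. Lebesgue measure on L, the latter being the image of
  Lebesgue measure on R^k under a linear isometry of R^k onto L.\<close>
definition mass_distribution :: "'k::finite itself \<Rightarrow> (real^'n::finite) set \<Rightarrow> (real^'n) measure \<Rightarrow> bool" where
  "mass_distribution _ L M \<longleftrightarrow>
     prob_space M \<and> sets M = sets borel \<and> emeasure M (- L) = 0 \<and>
     (\<forall>f :: real^'k \<Rightarrow> real^'n. linear f \<and> (\<forall>x. norm (f x) = norm x) \<and> range f = L \<longrightarrow>
         absolutely_continuous (distr lborel borel f) M)"

text \<open>The Grassmannian is topologised via orthogonal projections
  (closest_point L), measures via weak convergence (bounded continuous test functions).\<close>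
definition mass_assignment :: "'k::finite itself \<Rightarrow> ((real^'n::finite) set \<Rightarrow> (real^'n) measure) \<Rightarrow> bool" where
  "mass_assignment K \<mu> \<longleftrightarrow>
     (\<forall>L. k_subspace K L \<longrightarrow> mass_distribution K L (\<mu> L)) \<and>
     (\<forall>(Ls :: nat \<Rightarrow> (real^'n) set) L.
        (\<forall>m. k_subspace K (Ls m)) \<and> k_subspace K L \<and>
        (\<forall>x. (\<lambda>m. closest_point (Ls m) x) \<longlonglongrightarrow> closest_point L x) \<longrightarrow>
        (\<forall>g :: real^'n \<Rightarrow> real. continuous_on UNIV g \<and> bounded (range g) \<longrightarrow>
           (\<lambda>m. integral\<^sup>L (\<mu> (Ls m)) g) \<longlonglongrightarrow> integral\<^sup>L (\<mu> L) g))"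

end

theory Submission
  imports Defs
begin

lemma null_preimage:
  fixes g :: "real^'n::finite \<Rightarrow> real^'k::finite" and f :: "real^'k \<Rightarrow> real^'n"
  assumes lg: "linear g" and lf: "linear f" and gf: "\<And>y. g (f y) = y"
    and N: "N \<in> null_sets (lborel :: (real^'k) measure)"
  shows "g -` N \<in> null_sets (lborel :: (real^'n) measure)"
proof -
  define \<Phi> :: "(real^'n) \<times> (real^'k) \<Rightarrow> (real^'n) \<times> (real^'k)" where
    "\<Phi> = (\<lambda>(x,y). (x - f (g x) + f y, g x))"
  have linPhi: "linear \<Phi>"
  proof -
    have bf: "bounded_linear f" and bg: "bounded_linear g" using lf lg linear_conv_bounded_linear by auto
    have "bounded_linear (\<lambda>z::(real^'n) \<times> (real^'k). (fst z - f (g (fst z)) + f (snd z), g (fst z)))"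
      by (intro bounded_linear_Pair bounded_linear_add bounded_linear_sub bounded_linear_fst
          bounded_linear_compose[OF bf bounded_linear_snd]
          bounded_linear_compose[OF bg bounded_linear_fst]
          bounded_linear_compose[OF bf bounded_linear_compose[OF bg bounded_linear_fst]])
    then have "linear (\<lambda>z::(real^'n) \<times> (real^'k). (fst z - f (g (fst z)) + f (snd z), g (fst z)))"
      by (rule bounded_linear.linear)
    moreover have "\<Phi> = (\<lambda>z. (fst z - f (g (fst z)) + f (snd z), g (fst z)))"
      unfolding \<Phi>_def by (auto simp: fun_eq_iff)
    ultimately show ?thesis by simp
  qed
  have Nb[measurable]: "N \<in> sets borel" using N by auto
  have "(UNIV :: (real^'n) set) \<times> N \<in> null_sets (lborel \<Otimes>\<^sub>M lborel)"
    using N by (intro lborel.times_in_null_sets2) auto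
  then have "UNIV \<times> N \<in> null_sets (lborel :: ((real^'n) \<times> (real^'k)) measure)"
    by (simp add: lborel_prod)
  then have "negligible ((UNIV :: (real^'n) set) \<times> N)"
    by (simp add: negligible_iff_null_sets null_sets_completionI)
  then have neg: "negligible (\<Phi> ` (UNIV \<times> N))"
    by (intro negligible_differentiable_image_negligible linear_imp_differentiable_on linPhi) auto
  have gPhi: "g (x - f (g x) + f y) = y" for x y
  proof -
    have "g (x - f (g x) + f y) = g x - g (f (g x)) + g (f y)"
      by (simp only: linear_add[OF lg] linear_diff[OF lg])
    then show ?thesis by (simp add: gf)
  qed
  have PhiPhi: "\<Phi> (\<Phi> (x,y)) = (x,y)" for x y
    unfolding \<Phi>_def prod.case gPhi by simp
  have eq: "\<Phi> ` (UNIV \<times> N) = g -` N \<times> (UNIV :: (real^'k) set)"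
  proof (intro set_eqI iffI)
    fix z :: "(real^'n) \<times> (real^'k)" assume "z \<in> \<Phi> ` (UNIV \<times> N)"
    then obtain x y where "y \<in> N" "z = \<Phi> (x,y)" by auto
    then show "z \<in> g -` N \<times> UNIV" unfolding \<Phi>_def by (simp add: gPhi)
  next
    fix z :: "(real^'n) \<times> (real^'k)" assume z: "z \<in> g -` N \<times> UNIV"
    obtain x y where zxy: "z = (x,y)" by fastforce
    have "\<Phi> (x,y) \<in> UNIV \<times> N" using z zxy unfolding \<Phi>_def by simp
    then have "\<Phi> (\<Phi> (x,y)) \<in> \<Phi> ` (UNIV \<times> N)" by (rule imageI)
    then show "z \<in> \<Phi> ` (UNIV \<times> N)" using zxy PhiPhi by simp
  qed
  have gm: "g \<in> borel_measurable borel"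
    using lg by (intro borel_measurable_continuous_onI linear_continuous_on linear_conv_bounded_linear[THEN iffD1])
  have gN[measurable]: "g -` N \<in> sets borel"
    using gm Nb by (metis measurable_sets space_borel vimage_Int Int_UNIV_right)
  have "g -` N \<times> (UNIV :: (real^'k) set) \<in> null_sets lebesgue"
    using neg eq by (simp add: negligible_iff_null_sets)
  then have "g -` N \<times> (UNIV :: (real^'k) set) \<in> null_sets lborel"
  proof -
    have "g -` N \<times> (UNIV :: (real^'k) set) \<in> sets borel"
      using gN by (intro borel_Times) auto
    then show ?thesis using \<open>g -` N \<times> (UNIV :: (real^'k) set) \<in> null_sets lebesgue\<close>
      by (subst (asm) null_sets_completion_iff) auto
  qed
  then have "g -` N \<times> (UNIV :: (real^'k) set) \<in> null_sets (lborel \<Otimes>\<^sub>M lborel)"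
    by (simp add: lborel_prod)
  then have "emeasure lborel (g -` N) * emeasure lborel (UNIV :: (real^'k) set) = 0"
    using lborel.emeasure_pair_measure_Times[where A="g -` N" and B="UNIV :: (real^'k) set" and N=lborel] gN
    by (auto dest: null_setsD1)
  then show ?thesis using gN by (auto simp: emeasure_lborel_UNIV intro!: null_setsI)
qed

lemma isometry_adjoint:
  fixes f :: "real^'k::finite \<Rightarrow> real^'n::finite"
  assumes lf: "linear f" and nf: "\<And>x. norm (f x) = norm x"
  shows "adjoint f (f y) = y" and "closest_point (range f) x = f (adjoint f x)"
proof -
  have ip: "inner (f a) (f b) = inner a b" for a b
    using dot_norm[of "f a" "f b"] dot_norm[of a b] nf[of "a+b"] nf[of a] nf[of b]
    by (simp add: linear_add[OF lf])
  have aw: "inner z (adjoint f w) = inner (f z) w" for z w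
    using adjoint_works[OF lf] by simp
  have "\<forall>z. inner z (adjoint f (f y)) = inner z y"
    using aw ip by simp
  then show af: "adjoint f (f y) = y" by (simp add: vector_eq_ldot)
  define p where "p = f (adjoint f x)"
  have sub: "subspace (range f)" using linear_subspace_image[OF lf subspace_UNIV] by simp
  have orth: "inner (x - p) (f u) = 0" for u
  proof -
    have "inner x (f u) = inner u (adjoint f x)" using aw[of u x] by (simp add: inner_commute)
    moreover have "inner p (f u) = inner (adjoint f x) u" unfolding p_def by (rule ip)
    ultimately show ?thesis by (simp add: inner_diff_left inner_commute[of u])
  qed
  show "closest_point (range f) x = f (adjoint f x)"
    unfolding p_def[symmetric]
  proof (rule closest_point_unique[symmetric])
    show "convex (range f)" using sub by (rule subspace_imp_convex)
    show "closed (range f)" using sub by (rule closed_subspace)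
    show "p \<in> range f" unfolding p_def by simp
    show "\<forall>z\<in>range f. dist x p \<le> dist x z"
    proof
      fix z assume "z \<in> range f"
      then obtain w where zw: "z = f w" by auto
      have pz: "p - z = f (adjoint f x - w)" unfolding p_def zw by (simp add: linear_diff[OF lf])
      have "inner (x - p) (p - z) = 0" using orth[of "adjoint f x - w"] pz by simp
      from norm_add_Pythagorean[OF this[folded orthogonal_def]]
      have "(norm (x - z))\<^sup>2 = (norm (x - p))\<^sup>2 + (norm (p - z))\<^sup>2" by simp
      then have "(norm (x - p))\<^sup>2 \<le> (norm (x - z))\<^sup>2" by simp
      then have "norm (x - p) \<le> norm (x - z)" by (rule power2_le_imp_le) simp
      then show "dist x p \<le> dist x z" by (simp add: dist_norm)
    qed
  qed
qed

lemma cp_facts: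
  fixes L :: "(real^'n::finite) set"
  assumes "subspace L"
  shows "closest_point L \<in> borel_measurable borel" "\<And>x. closest_point L x \<in> L"
    "closed L" "L \<noteq> {}" "convex L"
proof -
  show cl: "closed L" using assms by (rule closed_subspace)
  show ne: "L \<noteq> {}" using assms subspace_0 by blast
  show cv: "convex L" using assms by (rule subspace_imp_convex)
  show "closest_point L \<in> borel_measurable borel"
    using continuous_on_closest_point[OF cv cl ne] by (rule borel_measurable_continuous_onI)
  show "\<And>x. closest_point L x \<in> L" using closest_point_in_set[OF cl ne] .
qed

lemma mass_assignment_proj:
  fixes \<nu> :: "(real^'n::finite) measure" and K :: "'k::finite itself"
  assumes P: "prob_space \<nu>" and S: "sets \<nu> = sets borel" and AC: "absolutely_continuous lborel \<nu>"
  shows "mass_assignment K (\<lambda>L. distr \<nu> borel (closest_point L))"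
proof -
  have sp: "space \<nu> = UNIV" using sets_eq_imp_space_eq[OF S] by simp
  have meas: "h \<in> measurable \<nu> borel" if "h \<in> borel_measurable borel" for h :: "real^'n \<Rightarrow> 'b::topological_space"
    using that measurable_cong_sets[OF S refl] by blast
  show ?thesis unfolding mass_assignment_def
  proof (intro conjI allI impI)
    fix L :: "(real^'n) set" assume kL: "k_subspace K L"
    then have sub: "subspace L" by (simp add: k_subspace_def)
    note cf = cp_facts[OF sub]
    have m: "closest_point L \<in> measurable \<nu> borel" using meas[OF cf(1)] .
    show "mass_distribution K L (distr \<nu> borel (closest_point L))"
      unfolding mass_distribution_def
    proof (intro conjI allI impI)
      show "prob_space (distr \<nu> borel (closest_point L))"
        using prob_space.prob_space_distr[OF P m] .
      show "sets (distr \<nu> borel (closest_point L)) = sets borel" by simp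
      have "- L \<in> sets borel" using cf(3) by (intro borel_comp borel_closed)
      moreover have "closest_point L -` (- L) = {}" using cf(2) by auto
      ultimately show "emeasure (distr \<nu> borel (closest_point L)) (- L) = 0"
        by (simp add: emeasure_distr[OF m] sp)
      fix f :: "real^'k \<Rightarrow> real^'n"
      assume fa: "linear f \<and> (\<forall>x. norm (f x) = norm x) \<and> range f = L"
      then have lf: "linear f" and nf: "\<And>x. norm (f x) = norm x" and rf: "range f = L" by auto
      note ia = isometry_adjoint[OF lf nf]
      have fm: "f \<in> borel_measurable borel"
        using lf by (intro borel_measurable_continuous_onI linear_continuous_on linear_conv_bounded_linear[THEN iffD1])
      show "absolutely_continuous (distr lborel borel f) (distr \<nu> borel (closest_point L))"
        unfolding absolutely_continuous_def
      proof
        fix A assume A: "A \<in> null_sets (distr lborel borel f)"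
        then have Ab: "A \<in> sets borel" by auto
        have fmm: "f \<in> measurable lborel borel" using fm by simp
        have "emeasure lborel (f -` A) = 0"
          using A Ab by (simp add: emeasure_distr[OF fmm] null_sets_def)
        moreover have "f -` A \<in> sets lborel" using fm Ab
          by (metis measurable_sets space_borel sets_lborel Int_UNIV_right)
        ultimately have "f -` A \<in> null_sets lborel" by auto
        then have "adjoint f -` (f -` A) \<in> null_sets lborel"
          by (rule null_preimage[OF adjoint_linear[OF lf] lf ia(1)])
        then have n: "adjoint f -` (f -` A) \<in> null_sets \<nu>"
          using AC unfolding absolutely_continuous_def by blast
        have "closest_point L -` A \<inter> space \<nu> = adjoint f -` (f -` A)"
          using ia(2) rf sp by auto
        then show "A \<in> null_sets (distr \<nu> borel (closest_point L))"
          using n Ab by (auto simp: null_sets_def emeasure_distr[OF m])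
      qed
    qed
  next
    fix Ls :: "nat \<Rightarrow> (real^'n) set" and L :: "(real^'n) set" and g :: "real^'n \<Rightarrow> real"
    assume H: "(\<forall>m. k_subspace K (Ls m)) \<and> k_subspace K L \<and>
        (\<forall>x. (\<lambda>m. closest_point (Ls m) x) \<longlonglongrightarrow> closest_point L x)"
      and G: "continuous_on UNIV g \<and> bounded (range g)"
    have subm: "subspace (Ls m)" for m using H by (simp add: k_subspace_def)
    have sub: "subspace L" using H by (simp add: k_subspace_def)
    have gb: "g \<in> borel_measurable borel" using G by (intro borel_measurable_continuous_onI) auto
    obtain B where B: "\<And>x. norm (g x) \<le> B" using G by (auto simp: bounded_iff)
    have eqm: "integral\<^sup>L (distr \<nu> borel (closest_point (Ls m))) g = (\<integral>x. g (closest_point (Ls m) x) \<partial>\<nu>)" for m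
      by (rule integral_distr[OF meas[OF cp_facts(1)[OF subm]] gb])
    have eq: "integral\<^sup>L (distr \<nu> borel (closest_point L)) g = (\<integral>x. g (closest_point L x) \<partial>\<nu>)"
      by (rule integral_distr[OF meas[OF cp_facts(1)[OF sub]] gb])
    have "(\<lambda>m. \<integral>x. g (closest_point (Ls m) x) \<partial>\<nu>) \<longlonglongrightarrow> (\<integral>x. g (closest_point L x) \<partial>\<nu>)"
    proof (rule integral_dominated_convergence[where w="\<lambda>_. B"])
      show "(\<lambda>x. g (closest_point L x)) \<in> borel_measurable \<nu>"
        using meas[OF measurable_comp[OF cp_facts(1)[OF sub] gb]] by (simp add: comp_def)
      show "(\<lambda>x. g (closest_point (Ls m) x)) \<in> borel_measurable \<nu>" for m
        using meas[OF measurable_comp[OF cp_facts(1)[OF subm] gb]] by (simp add: comp_def)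
      show "integrable \<nu> (\<lambda>_. B)"
        using finite_measure.integrable_const[OF prob_space.finite_measure[OF P]] .
      show "AE x in \<nu>. (\<lambda>m. g (closest_point (Ls m) x)) \<longlonglongrightarrow> g (closest_point L x)"
      proof (rule AE_I2)
        fix x
        have "(\<lambda>m. closest_point (Ls m) x) \<longlonglongrightarrow> closest_point L x" using H by blast
        moreover have "continuous_on UNIV g" using G by blast
        ultimately show "(\<lambda>m. g (closest_point (Ls m) x)) \<longlonglongrightarrow> g (closest_point L x)"
          using continuous_on_tendsto_compose[of UNIV g] by auto
      qed
      show "AE x in \<nu>. norm (g (closest_point (Ls m) x)) \<le> B" for m
        using B by simp
    qed
    then show "(\<lambda>m. integral\<^sup>L (distr \<nu> borel (closest_point (Ls m))) g) \<longlonglongrightarrow>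
        integral\<^sup>L (distr \<nu> borel (closest_point L)) g"
      by (simp add: eqm eq)
  qed
qed

lemma coord_bound:
  fixes v :: "real^'n::finite"
  shows "(\<exists>i. v$i \<ge> norm v / (real CARD('n))^2) \<or> -(\<Sum>i\<in>UNIV. v$i) \<ge> norm v / (real CARD('n))^2"
proof (rule ccontr)
  define d where "d = real CARD('n)"
  define t where "t = norm v / d^2"
  assume "\<not> ?thesis"
  then have lt: "\<And>i. v$i < t" and st: "-(\<Sum>i\<in>UNIV. v$i) < t" unfolding t_def d_def by (auto simp: not_le)
  have d1: "d \<ge> 1" unfolding d_def by simp
  have t0: "t \<ge> 0" unfolding t_def by simp
  have bnd: "\<bar>v$i\<bar> < d * t" for i
  proof -
    have e1: "(\<Sum>l\<in>UNIV. v$l) = v$i + (\<Sum>l\<in>UNIV - {i}. v$l)"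
      by (simp add: sum.remove[of UNIV i])
    have e2: "(\<Sum>l\<in>UNIV - {i}. v$l) \<le> (\<Sum>l\<in>UNIV - {i}. t)"
      using lt by (intro sum_mono) (simp add: less_imp_le)
    have e3: "(\<Sum>l\<in>UNIV - {i}. t) = real (CARD('n) - 1) * t"
      by (simp add: card_Diff_singleton)
    have e4: "real (CARD('n) - 1) = d - 1"
      unfolding d_def by (simp add: of_nat_diff)
    have e5: "(d - 1) * t = d * t - t" by (simp add: left_diff_distrib)
    have e6: "(\<Sum>l\<in>UNIV - {i}. t) = d * t - t" using e3 e4 e5 by simp
    have "v$i > - d * t" using e1 e2 e6 st by linarith
    moreover have "1 * t \<le> d * t" by (rule mult_right_mono[OF d1 t0])
    then have "v$i < d * t" using lt[of i] by linarith
    ultimately show ?thesis by simp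
  qed
  have "norm v \<le> (\<Sum>i\<in>UNIV. \<bar>v$i\<bar>)" by (rule norm_le_l1_cart)
  also have "\<dots> < (\<Sum>i\<in>(UNIV::'n set). d * t)"
    by (rule sum_strict_mono) (simp_all add: bnd)
  also have "\<dots> = d * d * t" unfolding d_def by simp
  also have "\<dots> = norm v" unfolding t_def using d1 by (simp add: power2_eq_square)
  finally show False by simp
qed

lemma inner_cp:
  fixes L :: "(real^'n::finite) set"
  assumes "subspace L" "v \<in> L"
  shows "inner v (closest_point L x) = inner v x"
proof -
  note cf = cp_facts[OF assms(1)]
  have p: "closest_point L x + v \<in> L" "closest_point L x - v \<in> L"
    using cf(2) assms by (auto intro: subspace_add subspace_diff)
  have "inner (x - closest_point L x) v \<le> 0"
    using closest_point_dot[OF cf(5) cf(3) p(1), of x] by simp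
  moreover have "inner (x - closest_point L x) (- v) \<le> 0"
    using closest_point_dot[OF cf(5) cf(3) p(2), of x] by simp
  ultimately have "inner (x - closest_point L x) v = 0" by simp
  then show ?thesis by (simp add: inner_diff_left inner_diff_right inner_commute)
qed

lemma slab_reduce:
  fixes L :: "(real^'n::finite) set" and \<nu> :: "(real^'n) measure"
  assumes "subspace L" "v \<in> L" and S: "sets \<nu> = sets borel"
  shows "measure (distr \<nu> borel (closest_point L)) {x \<in> L. a \<le> v \<bullet> x \<and> v \<bullet> x \<le> b}
       = measure \<nu> {x. a \<le> v \<bullet> x \<and> v \<bullet> x \<le> b}"
proof -
  note cf = cp_facts[OF assms(1)]
  have sp: "space \<nu> = UNIV" using sets_eq_imp_space_eq[OF S] by simp
  have m: "closest_point L \<in> measurable \<nu> borel" using cf(1) measurable_cong_sets[OF S refl] by blast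
  have T: "{x::real^'n. a \<le> v \<bullet> x \<and> v \<bullet> x \<le> b} \<in> sets borel" by measurable
  have "{x \<in> L. a \<le> v \<bullet> x \<and> v \<bullet> x \<le> b} = L \<inter> {x. a \<le> v \<bullet> x \<and> v \<bullet> x \<le> b}" by auto
  then have SB: "{x \<in> L. a \<le> v \<bullet> x \<and> v \<bullet> x \<le> b} \<in> sets borel"
    using T borel_closed[OF cf(3)] by auto
  have "closest_point L -` {x \<in> L. a \<le> v \<bullet> x \<and> v \<bullet> x \<le> b} \<inter> space \<nu> = {x. a \<le> v \<bullet> x \<and> v \<bullet> x \<le> b}"
    using cf(2) inner_cp[OF assms(1,2)] sp by auto
  then show ?thesis using measure_distr[OF m SB] by simp
qed

lemma unif_facts:
  fixes p :: "real^'n::finite"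
  assumes r: "r > 0"
  shows "prob_space (uniform_measure lborel (cball p r))"
    "sets (uniform_measure lborel (cball p r)) = sets borel"
    "absolutely_continuous lborel (uniform_measure lborel (cball p r))"
    "\<And>T. T \<in> sets borel \<Longrightarrow> measure (uniform_measure lborel (cball p r)) T
           = measure lborel (cball p r \<inter> T) / measure lborel (cball p r)"
    "measure lborel (cball p r) > 0"
proof -
  have pos: "measure lborel (cball p r) > 0" using content_cball_pos[OF r] by simp
  then show "measure lborel (cball p r) > 0" .
  have fin: "emeasure lborel (cball p r) \<noteq> \<infinity>" using emeasure_lborel_cball_finite[of p r] by (simp add: less_top)
  have nz: "emeasure lborel (cball p r) \<noteq> 0"
    using pos fin by (simp add: emeasure_eq_ennreal_measure)
  show "prob_space (uniform_measure lborel (cball p r))" by (rule prob_space_uniform_measure[OF nz fin])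
  show "sets (uniform_measure lborel (cball p r)) = sets borel" by simp
  show "absolutely_continuous lborel (uniform_measure lborel (cball p r))"
    unfolding absolutely_continuous_def
  proof
    fix A assume A: "A \<in> null_sets (lborel :: (real^'n) measure)"
    have "cball p r \<inter> A \<in> null_sets lborel" by (rule null_set_Int1[OF A]) auto
    then have "emeasure lborel (cball p r \<inter> A) = 0" by auto
    moreover have "A \<in> sets borel" using A by auto
    ultimately have "emeasure (uniform_measure lborel (cball p r)) A = 0"
      by (subst emeasure_uniform_measure) auto
    then show "A \<in> null_sets (uniform_measure lborel (cball p r))"
      using \<open>A \<in> sets borel\<close> by (intro null_setsI) auto
  qed
  show "\<And>T. T \<in> sets borel \<Longrightarrow> measure (uniform_measure lborel (cball p r)) T
           = measure lborel (cball p r \<inter> T) / measure lborel (cball p r)"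
    using nz fin by simp
qed

theorem mainTheorem6:
  assumes "CARD('k::finite) \<le> CARD('n::finite)"
  shows "\<exists>\<mu> :: nat \<Rightarrow> (real^'n) set \<Rightarrow> (real^'n) measure.
           (\<forall>i \<le> CARD('n) + 1. mass_assignment TYPE('k) (\<mu> i)) \<and>
           \<not> (\<exists>L v a b. k_subspace TYPE('k) L \<and> v \<in> L \<and> v \<noteq> 0 \<and> a \<le> b \<and>
                 (\<forall>i \<le> CARD('n) + 1.
                    measure (\<mu> i L) {x \<in> L. a \<le> v \<bullet> x \<and> v \<bullet> x \<le> b} = 1 / 2))"
proof -
  obtain h :: "nat \<Rightarrow> 'n" where h: "bij_betw h {0..<CARD('n)} UNIV"
    using ex_bij_betw_nat_finite[of "UNIV::'n set"] by auto
  define d where "d = real CARD('n)"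
  define r where "r = 1 / (2 * d^2)"
  have d1: "d \<ge> 1" unfolding d_def by simp
  have r0: "r > 0" unfolding r_def using d1 by simp
  define pt :: "nat \<Rightarrow> real^'n" where
    "pt j = (if j < CARD('n) then axis (h j) 1 else if j = CARD('n) then - (\<chi> i. 1) else 0)" for j
  define \<nu> where "\<nu> j = uniform_measure lborel (cball (pt j) r)" for j
  define \<mu> where "\<mu> = (\<lambda>j L. distr (\<nu> j) borel (closest_point L))"
  note U = unif_facts[OF r0]
  show ?thesis
  proof (intro exI[of _ \<mu>] conjI)
    show "\<forall>i \<le> CARD('n) + 1. mass_assignment TYPE('k) (\<mu> i)"
      unfolding \<mu>_def \<nu>_def using mass_assignment_proj[OF U(1) U(2) U(3)] by blast
    show "\<not> (\<exists>L v a b. k_subspace TYPE('k) L \<and> v \<in> L \<and> v \<noteq> 0 \<and> a \<le> b \<and>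
                 (\<forall>i \<le> CARD('n) + 1.
                    measure (\<mu> i L) {x \<in> L. a \<le> v \<bullet> x \<and> v \<bullet> x \<le> b} = 1 / 2))"
    proof
      assume "\<exists>L v a b. k_subspace TYPE('k) L \<and> v \<in> L \<and> v \<noteq> 0 \<and> a \<le> b \<and>
                 (\<forall>i \<le> CARD('n) + 1.
                    measure (\<mu> i L) {x \<in> L. a \<le> v \<bullet> x \<and> v \<bullet> x \<le> b} = 1 / 2)"
      then obtain L v a b where kL: "k_subspace TYPE('k) L" and vL: "v \<in> L"
        and half: "\<And>i. i \<le> CARD('n) + 1 \<Longrightarrow>
                    measure (\<mu> i L) {x \<in> L. a \<le> v \<bullet> x \<and> v \<bullet> x \<le> b} = 1 / 2"
        by blast
      define T where "T = {x::real^'n. a \<le> v \<bullet> x \<and> v \<bullet> x \<le> b}"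
      have TB: "T \<in> sets borel" unfolding T_def by measurable
      have sub: "subspace L" using kL by (simp add: k_subspace_def)
      have hm: "measure lborel (cball (pt j) r \<inter> T) / measure lborel (cball (pt j) r) = 1/2"
        if "j \<le> CARD('n) + 1" for j
      proof -
        have "measure (\<mu> j L) {x \<in> L. a \<le> v \<bullet> x \<and> v \<bullet> x \<le> b} = measure (\<nu> j) T"
          unfolding \<mu>_def T_def by (rule slab_reduce[OF sub vL]) (simp add: \<nu>_def)
        also have "\<dots> = measure lborel (cball (pt j) r \<inter> T) / measure lborel (cball (pt j) r)"
          unfolding \<nu>_def by (rule U(4)[OF TB])
        finally show ?thesis using half[OF that] by metis
      qed
      have bnds: "v \<bullet> pt j - r * norm v \<le> b \<and> a \<le> v \<bullet> pt j + r * norm v" if "j \<le> CARD('n)" for j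
      proof -
        have "cball (pt j) r \<inter> T \<noteq> {}"
        proof
          assume "cball (pt j) r \<inter> T = {}"
          then show False using hm[of j] that by simp
        qed
        then obtain x where x: "x \<in> cball (pt j) r" "x \<in> T" by blast
        have "\<bar>v \<bullet> x - v \<bullet> pt j\<bar> = \<bar>v \<bullet> (x - pt j)\<bar>" by (simp add: inner_diff_right)
        also have "\<dots> \<le> norm v * norm (x - pt j)" by (rule Cauchy_Schwarz_ineq2)
        also have "\<dots> \<le> norm v * r"
          using x(1) by (intro mult_left_mono) (auto simp: dist_norm norm_minus_commute)
        finally have "\<bar>v \<bullet> x - v \<bullet> pt j\<bar> \<le> r * norm v" by (simp add: mult.commute)
        then show ?thesis using x(2) unfolding T_def by auto
      qed
      have key: "\<exists>j\<le>CARD('n). w \<bullet> pt j \<ge> 2 * r * norm w" for w :: "real^'n"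
      proof -
        have rr: "norm w / d^2 = 2 * r * norm w" unfolding r_def using d1 by simp
        from coord_bound[of w]
        show ?thesis
        proof
          assume "\<exists>i. w $ i \<ge> norm w / (real CARD('n))^2"
          then obtain i where i: "w $ i \<ge> norm w / d^2" unfolding d_def by blast
          have "i \<in> h ` {0..<CARD('n)}" using h by (simp add: bij_betw_def)
          then obtain j where j: "j < CARD('n)" "h j = i" by auto
          have "w \<bullet> pt j = w $ i" using j by (simp add: pt_def inner_axis)
          then show ?thesis using i j rr by (intro exI[of _ j]) auto
        next
          assume s: "-(\<Sum>i\<in>UNIV. w $ i) \<ge> norm w / (real CARD('n))^2"
          have "w \<bullet> pt (CARD('n)) = -(\<Sum>i\<in>UNIV. w $ i)"
            by (simp add: pt_def inner_vec_def sum_negf)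
          then show ?thesis using s rr unfolding d_def by (intro exI[of _ "CARD('n)"]) auto
        qed
      qed
      obtain j1 where j1: "j1 \<le> CARD('n)" "v \<bullet> pt j1 \<ge> 2 * r * norm v" using key[of v] by blast
      obtain j2 where j2: "j2 \<le> CARD('n)" "(-v) \<bullet> pt j2 \<ge> 2 * r * norm (-v)" using key[of "-v"] by blast
      have bb: "b \<ge> r * norm v" using bnds[OF j1(1)] j1(2) by linarith
      have aa: "a \<le> - (r * norm v)" using bnds[OF j2(1)] j2(2) by simp
      have "cball (pt (CARD('n) + 1)) r \<subseteq> T"
      proof
        fix z assume "z \<in> cball (pt (CARD('n) + 1)) r"
        then have z: "norm z \<le> r" by (simp add: pt_def)
        have "\<bar>v \<bullet> z\<bar> \<le> norm v * norm z" by (rule Cauchy_Schwarz_ineq2)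
        also have "\<dots> \<le> norm v * r" using z by (intro mult_left_mono) auto
        finally have "\<bar>v \<bullet> z\<bar> \<le> r * norm v" by (simp add: mult.commute)
        then show "z \<in> T" using aa bb unfolding T_def by auto
      qed
      then have "cball (pt (CARD('n) + 1)) r \<inter> T = cball (pt (CARD('n) + 1)) r" by blast
      then have "measure lborel (cball (pt (CARD('n) + 1)) r \<inter> T) / measure lborel (cball (pt (CARD('n) + 1)) r) = 1"
        using U(5)[of "pt (CARD('n) + 1)"] by simp
      moreover have "measure lborel (cball (pt (CARD('n) + 1)) r \<inter> T) / measure lborel (cball (pt (CARD('n) + 1)) r) = 1/2"
        by (rule hm[OF order_refl])
      ultimately have "(1::real) = 1/2" by metis
      then show False by simp
    qed
  qed
qed

end
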